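(* Let $S,T$ be left inverse semi-braces and $\sigma:T\to\mathrm{Aut}(S)$ a homomorphism from $(T,\cdot)$ into the automorphism group of the left inverse semi-brace $S$; write ${}^ua=\sigma(u)(a)$. Then $S\times T$ with $$(a,u)+(b,v)=(a+b,\,u+v),\qquad (a,u)(b,v)=(a\,{}^ub,\,uv)$$ for all $(a,u),(b,v)\in S\times T$, is a left inverse semi-brace (the semidirect product $S\rtimes_\sigma T$).
   Context: An inverse semigroup is a semigroup $(S,\cdot)$ in which for each $a$ there is a unique $a^{-1}$ with $aa^{-1}a=a$, $a^{-1}aa^{-1}=a^{-1}$. A left inverse semi-brace is a triple $(S,+,\cdot)$ with $(S,+)$ a semigroup (not necessarily commutative), $(S,\cdot)$ an inverse semigroup and $a(b+c)=ab+a(a^{-1}+c)$ for all $a,b,c\in S$. An automorphism of the left inverse semi-brace $S$ is a bijection $S\to S$ preserving both $+$ and $\cdot$. *)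

theory Defs
  imports Main
begin

definition inverse_semigroup :: "('a \<Rightarrow> 'a \<Rightarrow> 'a) \<Rightarrow> bool" where
  "inverse_semigroup m \<longleftrightarrow>
     (\<forall>a b c. m (m a b) c = m a (m b c)) \<and>
     (\<forall>a. \<exists>!b. m (m a b) a = a \<and> m (m b a) b = b)"

definition inv_of :: "('a \<Rightarrow> 'a \<Rightarrow> 'a) \<Rightarrow> 'a \<Rightarrow> 'a" where
  "inv_of m a = (THE b. m (m a b) a = a \<and> m (m b a) b = b)"

definition left_inverse_semi_brace :: "('a \<Rightarrow> 'a \<Rightarrow> 'a) \<Rightarrow> ('a \<Rightarrow> 'a \<Rightarrow> 'a) \<Rightarrow> bool" where
  "left_inverse_semi_brace add mult \<longleftrightarrow>
     (\<forall>a b c. add (add a b) c = add a (add b c)) \<and>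
     inverse_semigroup mult \<and>
     (\<forall>a b c. mult a (add b c) = add (mult a b) (mult a (add (inv_of mult a) c)))"

definition semi_brace_automorphism ::
  "('a \<Rightarrow> 'a \<Rightarrow> 'a) \<Rightarrow> ('a \<Rightarrow> 'a \<Rightarrow> 'a) \<Rightarrow> ('a \<Rightarrow> 'a) \<Rightarrow> bool" where
  "semi_brace_automorphism add mult f \<longleftrightarrow>
     bij f \<and> (\<forall>a b. f (add a b) = add (f a) (f b)) \<and> (\<forall>a b. f (mult a b) = mult (f a) (f b))"

end

theory Submission
  imports Defs
begin

lemma inv_props:
  assumes "inverse_semigroup m"
  shows "m (m a (inv_of m a)) a = a \<and> m (m (inv_of m a) a) (inv_of m a) = inv_of m a"
proof -
  have "\<exists>!b. m (m a b) a = a \<and> m (m b a) b = b" using assms unfolding inverse_semigroup_def by blast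
  then show ?thesis unfolding inv_of_def by (rule theI')
qed

lemma inv_uniq:
  assumes "inverse_semigroup m" "m (m a b) a = a" "m (m b a) b = b"
  shows "inv_of m a = b"
proof -
  have "\<exists>!b. m (m a b) a = a \<and> m (m b a) b = b" using assms unfolding inverse_semigroup_def by blast
  then show ?thesis unfolding inv_of_def using assms(2,3) by (metis (mono_tags, lifting) the_equality)
qed

theorem corollary31:
  fixes addS multS :: "'a \<Rightarrow> 'a \<Rightarrow> 'a"
    and addT multT :: "'b \<Rightarrow> 'b \<Rightarrow> 'b"
    and \<sigma> :: "'b \<Rightarrow> 'a \<Rightarrow> 'a"
  assumes "left_inverse_semi_brace addS multS"
    and "left_inverse_semi_brace addT multT"
    and "\<forall>u. semi_brace_automorphism addS multS (\<sigma> u)"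
    and "\<forall>u v. \<sigma> (multT u v) = \<sigma> u \<circ> \<sigma> v"
  shows "left_inverse_semi_brace
           (\<lambda>(a, u) (b, v). (addS a b, addT u v))
           (\<lambda>(a, u) (b, v). (multS a (\<sigma> u b), multT u v))"
proof -
  have aS: "\<And>a b c. addS (addS a b) c = addS a (addS b c)"
   and iS: "inverse_semigroup multS"
   and bS: "\<And>a b c. multS a (addS b c) = addS (multS a b) (multS a (addS (inv_of multS a) c))"
    using assms(1) unfolding left_inverse_semi_brace_def by blast+
  have aT: "\<And>a b c. addT (addT a b) c = addT a (addT b c)"
   and iT: "inverse_semigroup multT"
   and bT: "\<And>a b c. multT a (addT b c) = addT (multT a b) (multT a (addT (inv_of multT a) c))"
    using assms(2) unfolding left_inverse_semi_brace_def by blast+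
  have mS: "\<And>a b c. multS (multS a b) c = multS a (multS b c)" using iS unfolding inverse_semigroup_def by blast
  have mT: "\<And>a b c. multT (multT a b) c = multT a (multT b c)" using iT unfolding inverse_semigroup_def by blast
  have inj: "\<And>u. inj (\<sigma> u)" using assms(3) unfolding semi_brace_automorphism_def bij_def by blast
  have sadd: "\<And>u a b. \<sigma> u (addS a b) = addS (\<sigma> u a) (\<sigma> u b)"
   and smul: "\<And>u a b. \<sigma> u (multS a b) = multS (\<sigma> u a) (\<sigma> u b)"
    using assms(3) unfolding semi_brace_automorphism_def by blast+
  have scomp: "\<And>u v x. \<sigma> (multT u v) x = \<sigma> u (\<sigma> v x)" using assms(4) by simp
  have sid: "\<sigma> e x = x" if "multT e e = e" for e x
  proof -
    have "\<sigma> e (\<sigma> e x) = \<sigma> e x" using scomp[of e e x] that by simp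
    then show ?thesis using inj[of e] by (simp add: inj_eq)
  qed
  have idem1: "multT (multT u v) (multT u v) = multT u v" if "multT (multT u v) u = u" for u v
    using that mT by metis
  define P where "P = (\<lambda>(a::'a, u::'b) (b, v). (multS a (\<sigma> u b), multT u v))"
  define I where "I = (\<lambda>(a, u). (\<sigma> (inv_of multT u) (inv_of multS a), inv_of multT u))"
  have Passoc: "P (P x y) z = P x (P y z)" for x y z
    by (cases x; cases y; cases z) (simp add: P_def mS mT smul scomp)
  have Iinv: "P (P x (I x)) x = x \<and> P (P (I x) x) (I x) = I x" for x
  proof (cases x)
    case (Pair a u)
    let ?u' = "inv_of multT u" and ?a' = "inv_of multS a"
    have tu: "multT (multT u ?u') u = u" "multT (multT ?u' u) ?u' = ?u'" using inv_props[OF iT] by blast+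
    have sa: "multS (multS a ?a') a = a" "multS (multS ?a' a) ?a' = ?a'" using inv_props[OF iS] by blast+
    have e1: "\<And>y. \<sigma> (multT u ?u') y = y" using sid idem1 tu(1) by blast
    have e2: "\<And>y. \<sigma> (multT ?u' u) y = y" using sid idem1 tu(2) by blast
    have c1: "\<sigma> u (\<sigma> ?u' y) = y" for y using e1 scomp by metis
    show ?thesis unfolding Pair P_def I_def
      apply (simp add: c1 e1 e2 scomp[symmetric] tu sa)
      by (metis sa(2) smul)
  qed
  have Iuniq: "I x = y" if "P (P x y) x = x" "P (P y x) y = y" for x y
  proof (cases x, cases y)
    fix a u b v assume xy: "x = (a, u)" "y = (b, v)"
    have t1: "multT (multT u v) u = u" "multT (multT v u) v = v" using that unfolding xy P_def by simp_all
    have vi: "inv_of multT u = v" using inv_uniq[OF iT t1] .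
    have e1: "\<And>y. \<sigma> (multT u v) y = y" using sid idem1 t1(1) by blast
    have e2: "\<And>y. \<sigma> (multT v u) y = y" using sid idem1 t1(2) by blast
    have s1: "multS (multS a (\<sigma> u b)) a = a"
      using that(1) unfolding xy P_def by (simp add: scomp[symmetric] e1)
    have s2': "multS (multS b (\<sigma> v a)) b = b"
      using that(2) unfolding xy P_def by (simp add: scomp[symmetric] e2)
    have s2: "multS (multS (\<sigma> u b) a) (\<sigma> u b) = \<sigma> u b"
    proof -
      have "\<sigma> u (multS (multS b (\<sigma> v a)) b) = \<sigma> u b" using s2' by simp
      then show ?thesis by (simp add: smul scomp[symmetric] e1)
    qed
    have ai: "inv_of multS a = \<sigma> u b" using inv_uniq[OF iS s1 s2] .
    have "\<sigma> v (\<sigma> u b) = b" using e2 scomp by metis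
    then show ?thesis unfolding xy I_def using vi ai by simp
  qed
  have invP: "inverse_semigroup P"
    unfolding inverse_semigroup_def
  proof (intro conjI allI)
    show "\<And>a b c. P (P a b) c = P a (P b c)" by (rule Passoc)
    fix x show "\<exists>!y. P (P x y) x = x \<and> P (P y x) y = y"
      using Iinv Iuniq by blast
  qed
  have invI: "inv_of P x = I x" for x
    using inv_uniq[OF invP] Iinv by blast
  define A where "A = (\<lambda>(a::'a, u::'b) (b, v). (addS a b, addT u v))"
  have brace: "P x (A y z) = A (P x y) (P x (A (inv_of P x) z))" for x y z
  proof (cases x; cases y; cases z)
    fix a u b v c w assume xyz: "x = (a, u)" "y = (b, v)" "z = (c, w)"
    let ?u' = "inv_of multT u" and ?a' = "inv_of multS a"
    have tu: "multT (multT u ?u') u = u" using inv_props[OF iT] by blast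
    have e1: "\<And>y. \<sigma> (multT u ?u') y = y" using sid idem1 tu(1) by blast
    have c1: "\<sigma> u (\<sigma> ?u' y) = y" for y using e1 scomp by metis
    have bS1: "multS a (addS (\<sigma> u b) (\<sigma> u c)) = addS (multS a (\<sigma> u b)) (multS a (addS ?a' (\<sigma> u c)))"
      by (rule bS)
    have bT1: "multT u (addT v w) = addT (multT u v) (multT u (addT ?u' w))" by (rule bT)
    show ?thesis unfolding xyz invI unfolding A_def P_def I_def
      by (simp only: prod.case sadd c1 bS1 bT1)
  qed
  have Aassoc: "A (A x y) z = A x (A y z)" for x y z
    by (cases x; cases y; cases z) (simp add: A_def aS aT)
  show ?thesis
    unfolding left_inverse_semi_brace_def P_def[symmetric] A_def[symmetric]
    using invP brace Aassoc by blast
qed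

end
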